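(* Let $\phi$ be the Fox function. (1) For every odd $l\ge 1$ and every integer $k>l/2$, $\phi(l,2k)=0$. (2) For every even $l\ge 0$ and every integer $k\ge l/2$, $\phi(l,2k)=\phi(l,2k+1)$. (3) For every even $l\ge 0$ and every integer $k\ge l/2$, $\phi(l+1,2k+1)=-\phi(l,2k+1)$.
   Context: For integers $0\le l\le k$, the Fox function is $\phi(l,k)=\sum_{\mathbf a}(-1)^{w(\mathbf a)+(l-1)}$, where the sum runs over all $l$-element subsets $\mathbf a\subseteq\{1,\dots,k\}$, $\mathbf b=\{1,\dots,k\}\setminus\mathbf a$, and $w(\mathbf a)$ is the number of pairs $(i,j)$ with $i\in\mathbf a$, $j\in\mathbf b$ and $j<i$. *)

theory Defs
  imports Main
begin

definition fox_w :: "nat \<Rightarrow> nat set \<Rightarrow> nat" where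
  "fox_w k a = card {(i, j). i \<in> a \<and> j \<in> {1..k} - a \<and> j < i}"

text \<open>The sign (-1)^(w(a) + (l-1)) is taken with integer exponent;
  since l - 1 and l + 1 have the same parity we write (-1)^(w(a) + l + 1),
  which avoids truncated natural subtraction at l = 0.\<close>
definition fox_phi :: "nat \<Rightarrow> nat \<Rightarrow> int" where
  "fox_phi l k = (\<Sum>a\<in>{a. a \<subseteq> {1..k} \<and> card a = l}. (-1::int) ^ (fox_w k a + l + 1))"

end

theory Submission
  imports Defs
begin

definition SS :: "nat \<Rightarrow> nat \<Rightarrow> nat set set" where
  "SS k l = {a. a \<subseteq> {1..k} \<and> card a = l}"

definition GG :: "nat \<Rightarrow> nat \<Rightarrow> int" where
  "GG k l = (\<Sum>a\<in>SS k l. (-1::int) ^ fox_w k a)"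

definition QQ :: "nat \<Rightarrow> nat \<Rightarrow> int" where
  "QQ n m = (if even n \<and> odd m then 0 else int (n div 2 choose m div 2))"

lemma finite_SS: "finite (SS k l)"
  unfolding SS_def by (rule finite_subset[of _ "Pow {1..k}"]) auto

lemma w_notin:
  assumes "a \<subseteq> {1..k}" shows "fox_w (Suc k) a = fox_w k a"
proof -
  have "{(i, j). i \<in> a \<and> j \<in> {1..Suc k} - a \<and> j < i} = {(i, j). i \<in> a \<and> j \<in> {1..k} - a \<and> j < i}"
    using assms by fastforce
  then show ?thesis unfolding fox_w_def by simp
qed

lemma w_in:
  assumes "a \<subseteq> {1..k}" shows "fox_w (Suc k) (insert (Suc k) a) = fox_w k a + (k - card a)"
proof -
  have fa: "finite a" using assms finite_subset by blast
  let ?A = "{(i, j). i \<in> a \<and> j \<in> {1..k} - a \<and> j < i}"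
  let ?B = "Pair (Suc k) ` ({1..k} - a)"
  have eq: "{(i, j). i \<in> insert (Suc k) a \<and> j \<in> {1..Suc k} - insert (Suc k) a \<and> j < i} = ?A \<union> ?B"
    using assms by auto
  have finA: "finite ?A" by (rule finite_subset[of _ "a \<times> {1..k}"]) (use fa in auto)
  have finB: "finite ?B" by simp
  have disj: "?A \<inter> ?B = {}" using assms by auto
  have cD: "card ({1..k} - a) = k - card a"
    using card_Diff_subset[OF fa assms] by simp
  have cB: "card ?B = k - card a"
    using cD by (simp add: card_image inj_on_def)
  show ?thesis unfolding fox_w_def eq
    using card_Un_disjoint[OF finA finB disj] cB by simp
qed

lemma GG_0: "GG k 0 = 1"
proof -
  have "SS k 0 = {{}}"
  proof (rule set_eqI)
    fix a
    show "a \<in> SS k 0 \<longleftrightarrow> a \<in> {{}}"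
    proof
      assume "a \<in> SS k 0"
      then have "a \<subseteq> {1..k}" "card a = 0" unfolding SS_def by auto
      moreover have "finite a" using \<open>a \<subseteq> {1..k}\<close> finite_subset by blast
      ultimately show "a \<in> {{}}" by simp
    qed (simp add: SS_def)
  qed
  then show ?thesis unfolding GG_def fox_w_def by simp
qed

lemma GG_big: assumes "k < l" shows "GG k l = 0"
proof -
  have "SS k l = {}"
  proof (rule ccontr)
    assume "SS k l \<noteq> {}"
    then obtain a where "a \<subseteq> {1..k}" "card a = l" unfolding SS_def by auto
    then have "card a \<le> card {1..k}" by (intro card_mono) auto
    then have "l \<le> k" using \<open>card a = l\<close> by simp
    then show False using assms by simp
  qed
  then show ?thesis unfolding GG_def by simp
qed

lemma SS_split: "SS (Suc k) (Suc l) = SS k (Suc l) \<union> insert (Suc k) ` SS k l"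
proof
  show "SS (Suc k) (Suc l) \<subseteq> SS k (Suc l) \<union> insert (Suc k) ` SS k l"
  proof
    fix a assume a: "a \<in> SS (Suc k) (Suc l)"
    then have sub: "a \<subseteq> {1..Suc k}" and c: "card a = Suc l" unfolding SS_def by auto
    have fa: "finite a" using sub finite_subset by blast
    show "a \<in> SS k (Suc l) \<union> insert (Suc k) ` SS k l"
    proof (cases "Suc k \<in> a")
      case True
      have "a - {Suc k} \<in> SS k l" unfolding SS_def using sub c True fa by auto
      moreover have "a = insert (Suc k) (a - {Suc k})" using True by auto
      ultimately show ?thesis by blast
    next
      case False
      then have "a \<subseteq> {1..k}" using sub by (auto simp: le_Suc_eq)
      then show ?thesis using c unfolding SS_def by auto
    qed
  qed
next
  show "SS k (Suc l) \<union> insert (Suc k) ` SS k l \<subseteq> SS (Suc k) (Suc l)"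
  proof
    fix a assume "a \<in> SS k (Suc l) \<union> insert (Suc k) ` SS k l"
    then show "a \<in> SS (Suc k) (Suc l)"
    proof
      assume "a \<in> SS k (Suc l)" then show ?thesis unfolding SS_def by auto
    next
      assume "a \<in> insert (Suc k) ` SS k l"
      then obtain b where b: "b \<subseteq> {1..k}" "card b = l" "a = insert (Suc k) b"
        unfolding SS_def by auto
      have "finite b" using b(1) finite_subset by blast
      moreover have "Suc k \<notin> b" using b(1) by auto
      ultimately show ?thesis using b unfolding SS_def by auto
    qed
  qed
qed

lemma GG_rec: "GG (Suc k) (Suc l) = GG k (Suc l) + (-1) ^ (k - l) * GG k l"
proof -
  have disj: "SS k (Suc l) \<inter> insert (Suc k) ` SS k l = {}" unfolding SS_def by auto
  have inj: "inj_on (insert (Suc k)) (SS k l)"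
    unfolding inj_on_def SS_def by auto (metis Diff_insert_absorb atLeastAtMost_iff not_less_eq_eq order_refl subsetD)+
  have "GG (Suc k) (Suc l) = (\<Sum>a\<in>SS k (Suc l). (-1::int) ^ fox_w (Suc k) a)
        + (\<Sum>a\<in>insert (Suc k) ` SS k l. (-1::int) ^ fox_w (Suc k) a)"
    unfolding GG_def SS_split by (rule sum.union_disjoint) (auto simp: finite_SS disj)
  also have "(\<Sum>a\<in>SS k (Suc l). (-1::int) ^ fox_w (Suc k) a) = GG k (Suc l)"
    unfolding GG_def by (rule sum.cong) (auto simp: SS_def w_notin)
  also have "(\<Sum>a\<in>insert (Suc k) ` SS k l. (-1::int) ^ fox_w (Suc k) a)
       = (\<Sum>a\<in>SS k l. (-1::int) ^ fox_w (Suc k) (insert (Suc k) a))"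
    by (rule sum.reindex[OF inj, unfolded comp_def])
  also have "\<dots> = (\<Sum>a\<in>SS k l. (-1) ^ (k - l) * (-1::int) ^ fox_w k a)"
    by (rule sum.cong) (auto simp: SS_def w_in power_add)
  also have "\<dots> = (-1) ^ (k - l) * GG k l" unfolding GG_def by (simp add: sum_distrib_left)
  finally show ?thesis .
qed

lemma QQ_big: assumes "k < l" shows "QQ k l = 0"
proof -
  have "\<not> (even k \<and> odd l) \<Longrightarrow> k div 2 < l div 2" using assms by presburger
  then show ?thesis unfolding QQ_def by auto
qed

lemma QQ_rec: assumes "l \<le> k" shows "QQ (Suc k) (Suc l) = QQ k (Suc l) + (-1) ^ (k - l) * QQ k l"
proof -
  have par: "even (k - l) \<longleftrightarrow> (even k \<longleftrightarrow> even l)" using assms by presburger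
  consider (ee) "even k" "even l" | (eo) "even k" "odd l" | (oe) "odd k" "even l" | (oo) "odd k" "odd l" by blast
  then show ?thesis
  proof cases
    case ee
    have "Suc k div 2 = k div 2" "Suc l div 2 = l div 2" using ee by presburger+
    then show ?thesis using ee par unfolding QQ_def by simp
  next
    case eo
    have "Suc k div 2 = k div 2" using eo by presburger
    then show ?thesis using eo par unfolding QQ_def by simp
  next
    case oe
    have "Suc l div 2 = l div 2" using oe by presburger
    then show ?thesis using oe par unfolding QQ_def by simp
  next
    case oo
    have a: "Suc k div 2 = Suc (k div 2)" "Suc l div 2 = Suc (l div 2)" using oo by presburger+
    show ?thesis using oo par unfolding QQ_def a by simp
  qed
qed

lemma GG_QQ: "GG k l = QQ k l"
proof (induction k arbitrary: l)
  case 0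
  then show ?case
    by (cases l) (auto simp: GG_0 GG_big QQ_def)
next
  case (Suc k)
  show ?case
  proof (cases l)
    case 0 then show ?thesis by (simp add: GG_0 QQ_def)
  next
    case (Suc l')
    show ?thesis
    proof (cases "l' \<le> k")
      case True
      then show ?thesis using Suc by (simp add: GG_rec QQ_rec Suc.IH)
    next
      case False
      then show ?thesis using Suc by (simp add: GG_big QQ_big)
    qed
  qed
qed

lemma phi_GG: "fox_phi l k = (-1) ^ (l + 1) * GG k l"
  unfolding fox_phi_def GG_def SS_def by (simp add: power_add sum_distrib_left mult.commute)

theorem proposition2p3:
  shows "(\<forall>l k::nat. odd l \<and> l \<ge> 1 \<and> 2 * k > l \<longrightarrow> fox_phi l (2 * k) = 0)
       \<and> (\<forall>l k::nat. even l \<and> 2 * k \<ge> l \<longrightarrow> fox_phi l (2 * k) = fox_phi l (2 * k + 1))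
       \<and> (\<forall>l k::nat. even l \<and> 2 * k \<ge> l \<longrightarrow> fox_phi (l + 1) (2 * k + 1) = - fox_phi l (2 * k + 1))"
  by (auto simp: phi_GG GG_QQ QQ_def)

end
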